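(* Let $\mu\in\mathcal{P}(\mathbb{R}^{dT})$, let $(X^{(n)})_{n\in\mathbb{N}}$ be i.i.d. samples from $\mu$ with empirical measures $\mu^N=\frac1N\sum_{n=1}^N\delta_{X^{(n)}}$, and let $\Phi^N_t$ denote either the uniform partition $\hat\Phi^N_t$ or the non-uniform partition $\check\Phi^N_t$. For $t=1,\dots,T-1$ set \[\tilde Y_t=N^{-1}\sum_{G\in\Phi^N_t}(N\mu^N(G))^{1-\frac1d}.\] Then for all $t=1,\dots,T-1$, $N\in\mathbb{N}$ and $x>0$, \[\mathbb{P}\big[|\tilde Y_t-\mathbb{E}[\tilde Y_t]|\ge x\big]\le2e^{-2Nx^2}.\]
   Context: Fix integers $d\ge1$, $T\ge2$. For Borel $G\subseteq\mathbb{R}^{dt}$, $\mu^N(G)=\frac1N\#\{n\le N: X^{(n)}_{1:t}\in G\}$, where $X_{1:t}$ denotes the first $t$ $\mathbb{R}^d$-valued coordinates. Grids: $\Delta_N=N^{-1/(dT)}$, $m=\lceil1/\Delta_N\rceil$; $\hat\Phi^N_t=\{[0,\frac1m]^{dt}+\frac1m\mathbf z:\mathbf z\in\mathbb{Z}^{dt}\}$; with $\mathcal{A}^t_0=[-1,1]^{dt}$, $\mathcal{A}^t_j=[-2^j,2^j]^{dt}\setminus[-2^{j-1},2^{j-1}]^{dt}$ ($j\ge1$), $\check\Phi^N_t=\bigcup_{j\ge0}\{[0,\frac{2^{j-1}}m]^{dt}+\frac{2^{j-1}}m\mathbf z\ \text{contained in (the closure of)}\ \mathcal{A}^t_j:\mathbf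 z\in\mathbb{Z}^{dt}\}$. Each point is regarded as belonging to exactly one cell of the partition (points on common boundaries are assigned to one cell). *)

theory Defs
  imports "HOL-Probability.Probability"
begin

text \<open>Points of R^k are represented as extensional functions nat => real
  supported on {..<k} (the space of the product measure PiM {..<k} (%_. borel)).
  Cells are half-open boxes (each point lies in exactly one cell).\<close>

definition hbox :: "nat \<Rightarrow> real \<Rightarrow> (nat \<Rightarrow> int) \<Rightarrow> (nat \<Rightarrow> real) set" where
  "hbox k s z = {y \<in> PiE {..<k} (\<lambda>_. UNIV).
      \<forall>i<k. s * real_of_int (z i) \<le> y i \<and> y i < s * (real_of_int (z i) + 1)}"

definition cbox_cell :: "nat \<Rightarrow> real \<Rightarrow> (nat \<Rightarrow> int) \<Rightarrow> (nat \<Rightarrow> real) set" where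
  "cbox_cell k s z = {y \<in> PiE {..<k} (\<lambda>_. UNIV).
      \<forall>i<k. s * real_of_int (z i) \<le> y i \<and> y i \<le> s * (real_of_int (z i) + 1)}"

definition cube :: "nat \<Rightarrow> real \<Rightarrow> (nat \<Rightarrow> real) set" where
  "cube k r = {y \<in> PiE {..<k} (\<lambda>_. UNIV). \<forall>i<k. - r \<le> y i \<and> y i \<le> r}"

definition annulus :: "nat \<Rightarrow> nat \<Rightarrow> (nat \<Rightarrow> real) set" where
  "annulus k j = (if j = 0 then cube k 1 else cube k (2 ^ j) - cube k (2 ^ (j - 1)))"

definition grid_m :: "nat \<Rightarrow> nat \<Rightarrow> nat \<Rightarrow> nat" where
  "grid_m d T N = nat \<lceil>1 / (real N powr (- 1 / real (d * T)))\<rceil>"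

definition unif_part :: "nat \<Rightarrow> nat \<Rightarrow> nat \<Rightarrow> nat \<Rightarrow> (nat \<Rightarrow> real) set set" where
  "unif_part d T N t = {hbox (d * t) (1 / real (grid_m d T N)) z | z. True}"

definition nonunif_part :: "nat \<Rightarrow> nat \<Rightarrow> nat \<Rightarrow> nat \<Rightarrow> (nat \<Rightarrow> real) set set" where
  "nonunif_part d T N t =
     {hbox (d * t) ((2::real) powi (int j - 1) / real (grid_m d T N)) z | j z.
        cbox_cell (d * t) ((2::real) powi (int j - 1) / real (grid_m d T N)) z
          \<subseteq> closure (annulus (d * t) j)}"

definition emp_meas :: "nat \<Rightarrow> nat \<Rightarrow> nat \<Rightarrow> (nat \<Rightarrow> 'a \<Rightarrow> (nat \<Rightarrow> real)) \<Rightarrow> 'a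
     \<Rightarrow> (nat \<Rightarrow> real) set \<Rightarrow> real" where
  "emp_meas d t N X \<omega> G = real (card {n \<in> {1..N}. restrict (X n \<omega>) {..<d * t} \<in> G}) / real N"

definition Ytil :: "nat \<Rightarrow> nat \<Rightarrow> nat \<Rightarrow> (nat \<Rightarrow> real) set set
     \<Rightarrow> (nat \<Rightarrow> 'a \<Rightarrow> (nat \<Rightarrow> real)) \<Rightarrow> 'a \<Rightarrow> real" where
  "Ytil d t N \<Phi> X \<omega> =
     (1 / real N) * infsum (\<lambda>G. (real N * emp_meas d t N X \<omega> G) powr (1 - 1 / real d)) \<Phi>"

end

theory Submission
  imports Defs
begin


lemma abs_int_le:
  fixes f g :: "'b \<Rightarrow> real"
  assumes "integrable M f" "integrable M g" "\<And>x. x \<in> space M \<Longrightarrow> \<bar>f x\<bar> \<le> g x"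
  shows "\<bar>\<integral>x. f x \<partial>M\<bar> \<le> (\<integral>x. g x \<partial>M)"
proof -
  have "\<bar>\<integral>x. f x \<partial>M\<bar> \<le> (\<integral>x. \<bar>f x\<bar> \<partial>M)"
    using integral_norm_bound[of M f] by simp
  also have "\<dots> \<le> (\<integral>x. g x \<partial>M)"
    by (rule integral_mono) (use assms in auto)
  finally show ?thesis .
qed

lemma mcd_mgf:
  fixes M :: "'i \<Rightarrow> 'a measure" and F :: "('i \<Rightarrow> 'a) \<Rightarrow> real"
  assumes P: "\<And>i. prob_space (M i)" and fin: "finite I"
  and Fm: "F \<in> borel_measurable (PiM I M)"
  and Fb: "\<And>x. x \<in> space (PiM I M) \<Longrightarrow> \<bar>F x\<bar> \<le> B"
  and Fd: "\<And>i x y y'. i \<in> I \<Longrightarrow> x \<in> space (PiM I M) \<Longrightarrow> y \<in> space (M i) \<Longrightarrow> y' \<in> space (M i)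
           \<Longrightarrow> \<bar>F (x(i:=y)) - F (x(i:=y'))\<bar> \<le> c"
  and l: "l > 0"
  shows "(\<integral>\<^sup>+x. ennreal (exp (l * (F x - (\<integral>x. F x \<partial>PiM I M)))) \<partial>PiM I M)
           \<le> ennreal (exp (l\<^sup>2 * c\<^sup>2 * real (card I) / 8))"
  using fin Fm Fb Fd
proof (induction I arbitrary: F B rule: finite_induct)
  case empty
  have "(\<integral>x. F x \<partial>PiM {} M) = F (\<lambda>_. undefined)"
    by (simp add: PiM_empty lebesgue_integral_count_space_finite)
  then show ?case by (simp add: PiM_empty nn_integral_count_space_finite)
next
  case (insert i I)
  interpret Mi: prob_space "M i" by (rule P)
  interpret PP: product_prob_space M UNIV by (rule product_prob_spaceI[OF P])
  interpret PI: prob_space "PiM I M" by (rule prob_space_PiM[OF P])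
  interpret PJ: prob_space "PiM (insert i I) M" by (rule prob_space_PiM[OF P])
  note Fm[measurable] = insert.prems(1)
  have upd: "x(i:=y) \<in> space (PiM (insert i I) M)" if "x \<in> space (PiM I M)" "y \<in> space (M i)" for x y
    using measurable_space[OF measurable_component_update[OF that(1) insert.hyps(2)] that(2)] .
  have fm: "(\<lambda>y. F (x(i:=y))) \<in> borel_measurable (M i)" if "x \<in> space (PiM I M)" for x
    using measurable_comp[OF measurable_component_update[OF that insert.hyps(2)] Fm] by (simp add: comp_def)
  have fint: "integrable (M i) (\<lambda>y. F (x(i:=y)))" if "x \<in> space (PiM I M)" for x
    by (rule Mi.integrable_const_bound[where B=B]) (auto intro!: insert.prems(2) upd that fm)
  have Fint: "integrable (PiM (insert i I) M) F"
    by (rule PJ.integrable_const_bound[where B=B]) (auto intro!: insert.prems(2))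
  define G where "G = (\<lambda>x. \<integral>y. F (x(i:=y)) \<partial>M i)"
  have Gm: "G \<in> borel_measurable (PiM I M)"
    unfolding G_def by measurable
  have EG: "(\<integral>x. F x \<partial>PiM (insert i I) M) = (\<integral>x. G x \<partial>PiM I M)"
    unfolding G_def by (rule PP.product_integral_insert[OF insert.hyps Fint])
  have c0: "c \<ge> 0"
  proof -
    obtain x where "x \<in> space (PiM I M)" using PI.not_empty by blast
    moreover obtain y where "y \<in> space (M i)" using Mi.not_empty by blast
    ultimately have "x(i:=y) \<in> space (PiM (insert i I) M)" "y \<in> space (M i)" using upd by auto
    from insert.prems(3)[OF insertI1 this(1) this(2) this(2)] show ?thesis by simp
  qed
  have Gb: "\<bar>G x\<bar> \<le> B" if "x \<in> space (PiM I M)" for x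
  proof -
    have "\<bar>G x\<bar> \<le> (\<integral>y. B \<partial>M i)" unfolding G_def
      by (rule abs_int_le) (auto intro!: fint that insert.prems(2) upd)
    then show ?thesis using prob_space.prob_space[OF P[of i]] by simp
  qed
  have Gd: "\<bar>G (x(j:=y)) - G (x(j:=y'))\<bar> \<le> c"
    if j: "j \<in> I" and x: "x \<in> space (PiM I M)" and y: "y \<in> space (M j)" and y': "y' \<in> space (M j)" for j x y y'
  proof -
    have xy: "x(j:=y) \<in> space (PiM I M)" "x(j:=y') \<in> space (PiM I M)"
      using x y y' j by (auto simp: space_PiM PiE_def extensional_def)
    have ij: "i \<noteq> j" using j insert.hyps by auto
    have sw: "(x(j:=u))(i:=z) = (x(i:=z))(j:=u)" for u z using ij by (auto simp: fun_eq_iff)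
    have bd: "\<bar>F ((x(j:=y))(i:=z)) - F ((x(j:=y'))(i:=z))\<bar> \<le> c" if z: "z \<in> space (M i)" for z
      unfolding sw by (rule insert.prems(3)[OF insertI2[OF j] upd[OF x z] y y'])
    have "G (x(j:=y)) - G (x(j:=y')) = (\<integral>z. F ((x(j:=y))(i:=z)) - F ((x(j:=y'))(i:=z)) \<partial>M i)"
      unfolding G_def by (rule Bochner_Integration.integral_diff[symmetric]) (auto intro!: fint xy)
    also have "\<bar>\<dots>\<bar> \<le> (\<integral>z. c \<partial>M i)"
      by (rule abs_int_le) (auto intro!: fint xy bd)
    finally show ?thesis using prob_space.prob_space[OF P[of i]] by simp
  qed
  have IH: "(\<integral>\<^sup>+x. ennreal (exp (l * (G x - (\<integral>x. G x \<partial>PiM I M)))) \<partial>PiM I M)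
           \<le> ennreal (exp (l\<^sup>2 * c\<^sup>2 * real (card I) / 8))"
    by (rule insert.IH[OF Gm Gb Gd])
  define E where "E = (\<integral>x. G x \<partial>PiM I M)"
  have hoeff: "(\<integral>\<^sup>+y. ennreal (exp (l * (F (x(i:=y)) - G x))) \<partial>M i) \<le> ennreal (exp (l\<^sup>2 * c\<^sup>2 / 8))"
    if x: "x \<in> space (PiM I M)" for x
  proof -
    let ?f = "\<lambda>y. F (x(i:=y))"
    define a where "a = Inf (?f ` space (M i))"
    have bdd: "bdd_below (?f ` space (M i))"
    proof (rule bdd_belowI[where m="-B"])
      fix v assume "v \<in> ?f ` space (M i)"
      then obtain y where y: "y \<in> space (M i)" "v = ?f y" by auto
      have h: "\<bar>?f y\<bar> \<le> B" by (rule insert.prems(2)[OF upd[OF x y(1)]])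
      from abs_le_D2[OF h] y(2) show "-B \<le> v" by linarith
    qed
    have ne: "?f ` space (M i) \<noteq> {}" using Mi.not_empty by auto
    have inint: "?f y \<in> {a..a+c}" if y: "y \<in> space (M i)" for y
    proof -
      have 1: "a \<le> ?f y" unfolding a_def using bdd y by (auto intro: cInf_lower)
      have "?f y - c \<le> a" unfolding a_def
      proof (rule cInf_greatest[OF ne])
        fix v assume "v \<in> ?f ` space (M i)"
        then obtain y' where y': "y' \<in> space (M i)" "v = ?f y'" by auto
        obtain y0 where y0: "y0 \<in> space (M i)" using Mi.not_empty by blast
        have "\<bar>F (x(i:=y)) - F (x(i:=y'))\<bar> \<le> c"
          using insert.prems(3)[OF insertI1 upd[OF x y0] y y'(1)] by (simp only: fun_upd_upd)
        from abs_le_D1[OF this] y'(2) show "?f y - c \<le> v" by linarith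
      qed
      with 1 show ?thesis by simp
    qed
    interpret ib: interval_bounded_random_variable "M i" ?f a "a + c"
      by (intro interval_bounded_random_variable.intro interval_bounded_random_variable_axioms.intro P fm x AE_I2 inint)
    have "(\<integral>\<^sup>+y. ennreal (exp (l * (?f y - Mi.expectation ?f))) \<partial>M i) \<le> ennreal (exp (l\<^sup>2 * (a + c - a)\<^sup>2 / 8))"
      by (rule ib.Hoeffdings_lemma_nn_integral[OF l])
    then show ?thesis by (simp add: G_def)
  qed
  have "(\<integral>\<^sup>+x. ennreal (exp (l * (F x - E))) \<partial>PiM (insert i I) M)
      = (\<integral>\<^sup>+x. (\<integral>\<^sup>+y. ennreal (exp (l * (F (x(i:=y)) - E))) \<partial>M i) \<partial>PiM I M)"
    by (rule PP.product_nn_integral_insert[OF insert.hyps]) measurable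
  also have "\<dots> = (\<integral>\<^sup>+x. ennreal (exp (l * (G x - E))) * (\<integral>\<^sup>+y. ennreal (exp (l * (F (x(i:=y)) - G x))) \<partial>M i) \<partial>PiM I M)"
  proof (rule nn_integral_cong)
    fix x assume x: "x \<in> space (PiM I M)"
    have "(\<integral>\<^sup>+y. ennreal (exp (l * (F (x(i:=y)) - E))) \<partial>M i)
        = (\<integral>\<^sup>+y. ennreal (exp (l * (G x - E))) * ennreal (exp (l * (F (x(i:=y)) - G x))) \<partial>M i)"
      by (rule nn_integral_cong) (simp add: ennreal_mult[symmetric] exp_add[symmetric] algebra_simps)
    also have "\<dots> = ennreal (exp (l * (G x - E))) * (\<integral>\<^sup>+y. ennreal (exp (l * (F (x(i:=y)) - G x))) \<partial>M i)"
      by (rule nn_integral_cmult) (use fm[OF x] in measurable)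
    finally show "(\<integral>\<^sup>+y. ennreal (exp (l * (F (x(i:=y)) - E))) \<partial>M i) = \<dots>" .
  qed
  also have "\<dots> \<le> (\<integral>\<^sup>+x. ennreal (exp (l * (G x - E))) * ennreal (exp (l\<^sup>2 * c\<^sup>2 / 8)) \<partial>PiM I M)"
    by (rule nn_integral_mono) (auto intro!: mult_left_mono hoeff)
  also have "\<dots> = (\<integral>\<^sup>+x. ennreal (exp (l * (G x - E))) \<partial>PiM I M) * ennreal (exp (l\<^sup>2 * c\<^sup>2 / 8))"
    by (rule nn_integral_multc) (use Gm in measurable)
  also have "\<dots> \<le> ennreal (exp (l\<^sup>2 * c\<^sup>2 * real (card I) / 8)) * ennreal (exp (l\<^sup>2 * c\<^sup>2 / 8))"
    using IH unfolding E_def by (rule mult_right_mono) simp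
  also have "\<dots> = ennreal (exp (l\<^sup>2 * c\<^sup>2 * real (card (insert i I)) / 8))"
    using insert.hyps by (simp add: ennreal_mult[symmetric] exp_add[symmetric] field_simps)
  finally show ?case unfolding E_def EG .
qed

lemma mcd_one:
  fixes M :: "'i \<Rightarrow> 'a measure" and F :: "('i \<Rightarrow> 'a) \<Rightarrow> real"
  assumes P: "\<And>i. prob_space (M i)" and fin: "finite I"
  and Fm: "F \<in> borel_measurable (PiM I M)"
  and Fb: "\<And>x. x \<in> space (PiM I M) \<Longrightarrow> \<bar>F x\<bar> \<le> B"
  and Fd: "\<And>i x y y'. i \<in> I \<Longrightarrow> x \<in> space (PiM I M) \<Longrightarrow> y \<in> space (M i) \<Longrightarrow> y' \<in> space (M i)
           \<Longrightarrow> \<bar>F (x(i:=y)) - F (x(i:=y'))\<bar> \<le> c"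
  and S: "c\<^sup>2 * real (card I) > 0" and e: "e > 0"
  shows "measure (PiM I M) {x \<in> space (PiM I M). F x - (\<integral>x. F x \<partial>PiM I M) \<ge> e}
           \<le> exp (- 2 * e\<^sup>2 / (c\<^sup>2 * real (card I)))"
proof -
  interpret PI: prob_space "PiM I M" by (rule prob_space_PiM[OF P])
  define S where "S = c\<^sup>2 * real (card I)"
  define E where "E = (\<integral>x. F x \<partial>PiM I M)"
  define l where "l = 4 * e / S"
  have Sp: "S > 0" using S by (simp add: S_def)
  have l: "l > 0" using Sp e by (simp add: l_def)
  have "ennreal (measure (PiM I M) {x \<in> space (PiM I M). F x - E \<ge> e})
      = emeasure (PiM I M) {x \<in> space (PiM I M). F x - E \<ge> e}"
    by (simp add: PI.emeasure_eq_measure)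
  also have "\<dots> \<le> ennreal (exp (-l*e)) * (\<integral>\<^sup>+x. ennreal (exp (l * (F x - E))) * indicator (space (PiM I M)) x \<partial>PiM I M)"
    by (rule Chernoff_ineq_nn_integral_ge[OF l]) (use Fm in measurable)
  also have "(\<integral>\<^sup>+x. ennreal (exp (l * (F x - E))) * indicator (space (PiM I M)) x \<partial>PiM I M)
           = (\<integral>\<^sup>+x. ennreal (exp (l * (F x - E))) \<partial>PiM I M)"
    by (rule nn_integral_cong) simp
  also have "ennreal (exp (-l*e)) * \<dots> \<le> ennreal (exp (-l*e)) * ennreal (exp (l\<^sup>2 * c\<^sup>2 * real (card I) / 8))"
    using mcd_mgf[OF P fin Fm Fb Fd l] unfolding E_def by (auto intro: mult_left_mono)
  also have "\<dots> = ennreal (exp (-l*e + l\<^sup>2 * S / 8))"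
    by (simp add: ennreal_mult[symmetric] exp_add[symmetric] S_def mult.assoc)
  also have "-l*e + l\<^sup>2 * S / 8 = - 2 * e\<^sup>2 / S"
    using Sp by (simp add: l_def field_simps power2_eq_square)
  finally show ?thesis unfolding E_def S_def
    by (subst (asm) ennreal_le_iff) auto
qed

lemma mcd_abs:
  fixes M :: "'i \<Rightarrow> 'a measure" and F :: "('i \<Rightarrow> 'a) \<Rightarrow> real"
  assumes P: "\<And>i. prob_space (M i)" and fin: "finite I"
  and Fm: "F \<in> borel_measurable (PiM I M)"
  and Fb: "\<And>x. x \<in> space (PiM I M) \<Longrightarrow> \<bar>F x\<bar> \<le> B"
  and Fd: "\<And>i x y y'. i \<in> I \<Longrightarrow> x \<in> space (PiM I M) \<Longrightarrow> y \<in> space (M i) \<Longrightarrow> y' \<in> space (M i)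
           \<Longrightarrow> \<bar>F (x(i:=y)) - F (x(i:=y'))\<bar> \<le> c"
  and S: "c\<^sup>2 * real (card I) > 0" and e: "e > 0"
  shows "measure (PiM I M) {x \<in> space (PiM I M). \<bar>F x - (\<integral>x. F x \<partial>PiM I M)\<bar> \<ge> e}
           \<le> 2 * exp (- 2 * e\<^sup>2 / (c\<^sup>2 * real (card I)))"
proof -
  interpret PI: prob_space "PiM I M" by (rule prob_space_PiM[OF P])
  define E where "E = (\<integral>x. F x \<partial>PiM I M)"
  have 1: "measure (PiM I M) {x \<in> space (PiM I M). F x - E \<ge> e} \<le> exp (- 2 * e\<^sup>2 / (c\<^sup>2 * real (card I)))"
    unfolding E_def by (rule mcd_one[OF P fin Fm Fb Fd S e])
  have Fm': "(\<lambda>x. - F x) \<in> borel_measurable (PiM I M)" using Fm by measurable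
  have "measure (PiM I M) {x \<in> space (PiM I M). - F x - (\<integral>x. - F x \<partial>PiM I M) \<ge> e} \<le> exp (- 2 * e\<^sup>2 / (c\<^sup>2 * real (card I)))"
    by (rule mcd_one[OF P fin Fm', where B=B and c=c]) (use Fb Fd S e in \<open>auto simp: abs_minus_commute\<close>)
  then have 2: "measure (PiM I M) {x \<in> space (PiM I M). E - F x \<ge> e} \<le> exp (- 2 * e\<^sup>2 / (c\<^sup>2 * real (card I)))"
    unfolding E_def by (simp add: algebra_simps)
  have eq: "{x \<in> space (PiM I M). \<bar>F x - E\<bar> \<ge> e} = {x \<in> space (PiM I M). F x - E \<ge> e} \<union> {x \<in> space (PiM I M). E - F x \<ge> e}"
    by auto
  have "measure (PiM I M) {x \<in> space (PiM I M). \<bar>F x - E\<bar> \<ge> e}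
      \<le> measure (PiM I M) {x \<in> space (PiM I M). F x - E \<ge> e} + measure (PiM I M) {x \<in> space (PiM I M). E - F x \<ge> e}"
  proof -
    have m1: "(\<lambda>x. F x - E) \<in> borel_measurable (PiM I M)"
      using Fm by (intro borel_measurable_diff borel_measurable_const)
    have m2: "(\<lambda>x. E - F x) \<in> borel_measurable (PiM I M)"
      using Fm by (intro borel_measurable_diff borel_measurable_const)
    have s1: "{x \<in> space (PiM I M). F x - E \<ge> e} \<in> sets (PiM I M)"
    proof -
      have "{x \<in> space (PiM I M). F x - E \<ge> e} = (\<lambda>x. F x - E) -` {e..} \<inter> space (PiM I M)" by auto
      also have "\<dots> \<in> sets (PiM I M)" by (rule measurable_sets[OF m1]) simp
      finally show ?thesis .
    qed
    have s2: "{x \<in> space (PiM I M). E - F x \<ge> e} \<in> sets (PiM I M)"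
    proof -
      have "{x \<in> space (PiM I M). E - F x \<ge> e} = (\<lambda>x. E - F x) -` {e..} \<inter> space (PiM I M)" by auto
      also have "\<dots> \<in> sets (PiM I M)" by (rule measurable_sets[OF m2]) simp
      finally show ?thesis .
    qed
    show ?thesis unfolding eq by (rule measure_Un_le[OF s1 s2])
  qed
  with 1 2 show ?thesis unfolding E_def by linarith
qed




definition cellof :: "'b set set \<Rightarrow> 'b \<Rightarrow> 'b set option" where
  "cellof \<Phi> p = (if \<exists>G\<in>\<Phi>. p \<in> G then Some (SOME G. G \<in> \<Phi> \<and> p \<in> G) else None)"

definition cnt :: "nat \<Rightarrow> (nat \<Rightarrow> 'b option) \<Rightarrow> 'b \<Rightarrow> nat" where
  "cnt N v G = card {n \<in> {1..N}. v n = Some G}"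

definition gp :: "real \<Rightarrow> nat \<Rightarrow> real" where
  "gp e c = real c powr e"

definition HH :: "nat \<Rightarrow> real \<Rightarrow> 'b set \<Rightarrow> (nat \<Rightarrow> 'b option) \<Rightarrow> real" where
  "HH N e \<Phi> v = (1 / real N) * infsum (\<lambda>G. gp e (cnt N v G)) \<Phi>"

definition Sv :: "nat \<Rightarrow> (nat \<Rightarrow> 'b option) \<Rightarrow> 'b set" where
  "Sv N v = (\<lambda>n. the (v n)) ` {n \<in> {1..N}. v n \<noteq> None}"

definition pdisj :: "'b set set \<Rightarrow> bool" where
  "pdisj \<Phi> \<longleftrightarrow> (\<forall>G\<in>\<Phi>. \<forall>G'\<in>\<Phi>. \<forall>p. p \<in> G \<longrightarrow> p \<in> G' \<longrightarrow> G = G')"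

lemma cellof_Some_iff:
  assumes "pdisj \<Phi>" "G \<in> \<Phi>"
  shows "cellof \<Phi> p = Some G \<longleftrightarrow> p \<in> G"
proof
  assume "cellof \<Phi> p = Some G"
  then have ex: "\<exists>G\<in>\<Phi>. p \<in> G" and G: "G = (SOME G. G \<in> \<Phi> \<and> p \<in> G)"
    unfolding cellof_def by (auto split: if_splits)
  from ex have "\<exists>G. G \<in> \<Phi> \<and> p \<in> G" by blast
  from someI_ex[OF this] show "p \<in> G" unfolding G[symmetric] by blast
next
  assume p: "p \<in> G"
  then have ex: "\<exists>G. G \<in> \<Phi> \<and> p \<in> G" using assms by blast
  from someI_ex[OF this] have "(SOME G. G \<in> \<Phi> \<and> p \<in> G) = G"
    using assms p unfolding pdisj_def by blast
  then show "cellof \<Phi> p = Some G" unfolding cellof_def using ex by auto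
qed

lemma cellof_Some_in:
  assumes "cellof \<Phi> p = Some G" shows "G \<in> \<Phi>" "p \<in> G"
proof -
  from assms have ex: "\<exists>G\<in>\<Phi>. p \<in> G" and G: "G = (SOME G. G \<in> \<Phi> \<and> p \<in> G)"
    unfolding cellof_def by (auto split: if_splits)
  from ex have "\<exists>G. G \<in> \<Phi> \<and> p \<in> G" by blast
  from someI_ex[OF this] show "G \<in> \<Phi>" "p \<in> G" unfolding G[symmetric] by blast+
qed

lemma cellof_None_iff: "cellof \<Phi> p = None \<longleftrightarrow> p \<notin> \<Union>\<Phi>"
  unfolding cellof_def by auto

lemma gp_0[simp]: "gp e 0 = 0"
  by (simp add: gp_def)

lemma gp_diff:
  assumes "0 \<le> e" "e \<le> 1"
  shows "0 \<le> gp e (Suc c) - gp e c" "gp e (Suc c) - gp e c \<le> 1"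
proof -
  show "0 \<le> gp e (Suc c) - gp e c"
  proof (cases "c = 0")
    case True then show ?thesis by (simp add: gp_def)
  next
    case False
    then show ?thesis unfolding gp_def using assms by (auto intro!: powr_mono2)
  qed
  show "gp e (Suc c) - gp e c \<le> 1"
  proof (cases "c = 0")
    case True then show ?thesis by (simp add: gp_def)
  next
    case False
    then have c1: "real c \<ge> 1" by simp
    have eqc: "real (Suc c) = real c * (1 + 1 / real c)"
      using c1 by (simp add: distrib_left)
    have "real (Suc c) powr e = (real c * (1 + 1 / real c)) powr e"
      by (subst eqc) (rule refl)
    also have "\<dots> = real c powr e * (1 + 1 / real c) powr e"
      using c1 by (simp add: powr_mult)
    also have "(1 + 1 / real c) powr e \<le> (1 + 1 / real c) powr 1"
      using assms c1 by (intro powr_mono) auto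
    also have "(1 + 1 / real c) powr 1 = 1 + 1 / real c" using c1 by simp
    finally have "real (Suc c) powr e \<le> real c powr e * (1 + 1 / real c)"
      using c1 by (simp add: mult_left_mono)
    also have "\<dots> = real c powr e + real c powr e / real c"
      by (simp add: field_simps)
    also have "real c powr e / real c = real c powr (e - 1)"
      using c1 by (simp add: powr_diff)
    also have "real c powr (e - 1) \<le> real c powr 0"
      using assms c1 by (intro powr_mono) auto
    finally show ?thesis using c1 by (simp add: gp_def)
  qed
qed

lemma gp_le:
  assumes "0 \<le> e" "e \<le> 1"
  shows "gp e c \<le> real c" "0 \<le> gp e c"
proof -
  show "0 \<le> gp e c" by (simp add: gp_def)
  show "gp e c \<le> real c"
  proof (cases "c = 0")
    case True then show ?thesis by simp
  next
    case False
    then have "real c powr e \<le> real c powr 1" using assms by (intro powr_mono) auto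
    then show ?thesis using False by (simp add: gp_def)
  qed
qed

lemma finite_Sv: "finite (Sv N v)"
  unfolding Sv_def by auto

lemma cnt_zero: "G \<notin> Sv N v \<Longrightarrow> cnt N v G = 0"
  unfolding cnt_def Sv_def by (auto simp: image_iff)

lemma cnt_zero': "x \<notin> T \<Longrightarrow> Sv N v \<subseteq> T \<Longrightarrow> cnt N v x = 0"
  by (rule cnt_zero) blast

lemma infsum_fin:
  "infsum (\<lambda>G. gp e (cnt N v G)) \<Phi> = (\<Sum>G\<in>\<Phi> \<inter> Sv N v. gp e (cnt N v G))"
proof -
  have "infsum (\<lambda>G. gp e (cnt N v G)) \<Phi> = infsum (\<lambda>G. gp e (cnt N v G)) (\<Phi> \<inter> Sv N v)"
    by (rule infsum_cong_neutral) (auto simp: cnt_zero)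
  also have "\<dots> = (\<Sum>G\<in>\<Phi> \<inter> Sv N v. gp e (cnt N v G))"
    by (rule infsum_finite) (simp add: finite_Sv)
  finally show ?thesis .
qed

lemma infsum_fin':
  assumes "finite T" "Sv N v \<subseteq> T"
  shows "infsum (\<lambda>G. gp e (cnt N v G)) \<Phi> = (\<Sum>G\<in>\<Phi> \<inter> T. gp e (cnt N v G))"
proof -
  have "infsum (\<lambda>G. gp e (cnt N v G)) \<Phi> = infsum (\<lambda>G. gp e (cnt N v G)) (\<Phi> \<inter> T)"
    by (rule infsum_cong_neutral) (use assms in \<open>auto simp: cnt_zero'\<close>)
  also have "\<dots> = (\<Sum>G\<in>\<Phi> \<inter> T. gp e (cnt N v G))"
    by (rule infsum_finite) (use assms in simp)
  finally show ?thesis .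
qed

lemma HH_diff:
  assumes e: "0 \<le> e" "e \<le> 1" and N: "N \<ge> 1" and i: "i \<in> {1..N}"
    and vi: "\<And>G. v i = Some G \<Longrightarrow> G \<in> \<Phi>"
  shows "0 \<le> HH N e \<Phi> v - HH N e \<Phi> (v(i:=None))" "HH N e \<Phi> v - HH N e \<Phi> (v(i:=None)) \<le> 1 / real N"
proof -
  let ?v0 = "v(i:=None)"
  have "0 \<le> HH N e \<Phi> v - HH N e \<Phi> ?v0 \<and> HH N e \<Phi> v - HH N e \<Phi> ?v0 \<le> 1 / real N"
  proof (cases "v i")
    case None
    then have "?v0 = v" by auto
    then show ?thesis using N by simp
  next
    case (Some G0)
    have G0: "G0 \<in> \<Phi>" using vi Some by blast
    have sub: "Sv N ?v0 \<subseteq> Sv N v" unfolding Sv_def by auto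
    have G0S: "G0 \<in> Sv N v" unfolding Sv_def using i Some by (auto intro!: image_eqI[where x=i])
    have cntd: "cnt N v G = cnt N ?v0 G + (if G = G0 then 1 else 0)" for G
    proof -
      have "{n \<in> {1..N}. v n = Some G} = {n \<in> {1..N}. ?v0 n = Some G} \<union> (if G = G0 then {i} else {})"
        using i Some by auto
      moreover have "i \<notin> {n \<in> {1..N}. ?v0 n = Some G}" by simp
      ultimately show ?thesis unfolding cnt_def by (auto simp: card_insert_if)
    qed
    have "infsum (\<lambda>G. gp e (cnt N v G)) \<Phi> - infsum (\<lambda>G. gp e (cnt N ?v0 G)) \<Phi>
        = (\<Sum>G\<in>\<Phi> \<inter> Sv N v. gp e (cnt N v G)) - (\<Sum>G\<in>\<Phi> \<inter> Sv N v. gp e (cnt N ?v0 G))"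
      using infsum_fin'[OF finite_Sv subset_refl, of e N v \<Phi>] infsum_fin'[OF finite_Sv sub, of e \<Phi>] by simp
    also have "\<dots> = (\<Sum>G\<in>\<Phi> \<inter> Sv N v. gp e (cnt N v G) - gp e (cnt N ?v0 G))"
      by (simp add: sum_subtractf)
    also have "\<dots> = (\<Sum>G\<in>\<Phi> \<inter> Sv N v. if G = G0 then gp e (Suc (cnt N ?v0 G0)) - gp e (cnt N ?v0 G0) else 0)"
      by (rule sum.cong) (auto simp: cntd)
    also have "\<dots> = gp e (Suc (cnt N ?v0 G0)) - gp e (cnt N ?v0 G0)"
      using G0 G0S by (simp add: finite_Sv)
    finally have eq: "infsum (\<lambda>G. gp e (cnt N v G)) \<Phi> - infsum (\<lambda>G. gp e (cnt N ?v0 G)) \<Phi> = gp e (Suc (cnt N ?v0 G0)) - gp e (cnt N ?v0 G0)" .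
    have "HH N e \<Phi> v - HH N e \<Phi> ?v0 = (1 / real N) * (gp e (Suc (cnt N ?v0 G0)) - gp e (cnt N ?v0 G0))"
      unfolding HH_def eq[symmetric] by (simp add: right_diff_distrib)
    moreover have "0 \<le> (1 / real N) * (gp e (Suc (cnt N ?v0 G0)) - gp e (cnt N ?v0 G0))"
      using gp_diff(1)[OF e, of "cnt N ?v0 G0"] by simp
    moreover have "(1 / real N) * (gp e (Suc (cnt N ?v0 G0)) - gp e (cnt N ?v0 G0)) \<le> (1 / real N) * 1"
      using gp_diff(2)[OF e, of "cnt N ?v0 G0"] by (intro mult_left_mono) auto
    ultimately show ?thesis by simp
  qed
  then show "0 \<le> HH N e \<Phi> v - HH N e \<Phi> (v(i:=None))" "HH N e \<Phi> v - HH N e \<Phi> (v(i:=None)) \<le> 1 / real N"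
    by auto
qed

lemma HH_bound:
  assumes e: "0 \<le> e" "e \<le> 1" and N: "N \<ge> 1"
  shows "\<bar>HH N e \<Phi> v\<bar> \<le> real N"
proof -
  have cle: "cnt N v G \<le> N" for G
    unfolding cnt_def by (rule order_trans[OF card_mono[of "{1..N}"]]) auto
  have cS: "card (\<Phi> \<inter> Sv N v) \<le> N"
  proof -
    have "card (\<Phi> \<inter> Sv N v) \<le> card (Sv N v)" by (rule card_mono[OF finite_Sv]) auto
    also have "\<dots> \<le> card {n \<in> {1..N}. v n \<noteq> None}" unfolding Sv_def by (rule card_image_le) auto
    also have "\<dots> \<le> card {1..N}" by (rule card_mono) auto
    finally show ?thesis by simp
  qed
  have s0: "0 \<le> (\<Sum>G\<in>\<Phi> \<inter> Sv N v. gp e (cnt N v G))" by (intro sum_nonneg gp_le(2)[OF e])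
  have "(\<Sum>G\<in>\<Phi> \<inter> Sv N v. gp e (cnt N v G)) \<le> (\<Sum>G\<in>\<Phi> \<inter> Sv N v. real N)"
    by (rule sum_mono) (use gp_le(1)[OF e] cle in \<open>meson of_nat_le_iff order_trans\<close>)
  also have "\<dots> = real (card (\<Phi> \<inter> Sv N v)) * real N" by simp
  also have "\<dots> \<le> real N * real N" using cS by (intro mult_right_mono) auto
  finally have "(\<Sum>G\<in>\<Phi> \<inter> Sv N v. gp e (cnt N v G)) \<le> real N * real N" .
  then show ?thesis using s0 N unfolding HH_def infsum_fin by (auto simp: divide_simps)
qed




lemma hbox_PiE: "hbox k s z = PiE {..<k} (\<lambda>i. {s * real_of_int (z i) ..< s * (real_of_int (z i) + 1)})"
  unfolding hbox_def by (auto simp: PiE_def Pi_def)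

lemma hbox_sets: "hbox k s z \<in> sets (PiM {..<k} (\<lambda>_. borel))"
  unfolding hbox_PiE by (rule sets_PiM_I_finite) auto

lemma hbox_restrict: "hbox k s z = hbox k s (restrict z {..<k})"
  unfolding hbox_def by auto

lemma hbox_eq: "(\<And>i. i < k \<Longrightarrow> z i = z' i) \<Longrightarrow> hbox k s z = hbox k s z'"
  unfolding hbox_def by auto

lemma hbox_floor:
  assumes s: "s > 0" and p: "p \<in> hbox k s z" and i: "i < k"
  shows "z i = \<lfloor>p i / s\<rfloor>"
proof -
  from p i have a: "s * z i \<le> p i" "p i < s * (z i + 1)" unfolding hbox_def by auto
  have "z i \<le> p i / s" using a(1) s by (simp add: field_simps)
  moreover have "p i / s < z i + 1" using a(2) s by (simp add: field_simps)
  ultimately show ?thesis by (intro floor_unique[symmetric]) auto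
qed

lemma hbox_same:
  assumes "s > 0" "p \<in> hbox k s z" "p \<in> hbox k s z'"
  shows "hbox k s z = hbox k s z'"
  using hbox_floor[OF assms(1,2)] hbox_floor[OF assms(1,3)] by (intro hbox_eq) auto

lemma countable_hboxes: "countable (range (hbox k s))"
proof -
  have "range (hbox k s) \<subseteq> hbox k s ` PiE {..<k} (\<lambda>_. UNIV)"
  proof (rule subsetI)
    fix G assume "G \<in> range (hbox k s)"
    then obtain z where "G = hbox k s z" by auto
    then show "G \<in> hbox k s ` PiE {..<k} (\<lambda>_. UNIV)"
      using hbox_restrict[of k s z] by (auto intro!: image_eqI[where x="restrict z {..<k}"])
  qed
  moreover have "countable (hbox k s ` PiE {..<k} (\<lambda>_. UNIV :: int set))"
    by (intro countable_image countable_PiE) auto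
  ultimately show ?thesis by (rule countable_subset)
qed

lemma cont_coord_abs: "continuous_on UNIV (\<lambda>y::nat \<Rightarrow> real. \<bar>y i\<bar>)"
  by (intro continuous_intros continuous_on_product_coordinates)

lemma cube_iff: "y \<in> cube k r \<longleftrightarrow> (\<forall>i<k. \<bar>y i\<bar> \<le> r) \<and> (\<forall>i. i \<ge> k \<longrightarrow> y i = undefined)"
proof
  assume "y \<in> cube k r" then show "(\<forall>i<k. \<bar>y i\<bar> \<le> r) \<and> (\<forall>i. i \<ge> k \<longrightarrow> y i = undefined)"
    unfolding cube_def PiE_def extensional_def by (auto simp: abs_le_iff)
next
  assume h: "(\<forall>i<k. \<bar>y i\<bar> \<le> r) \<and> (\<forall>i. i \<ge> k \<longrightarrow> y i = undefined)"
  have "- r \<le> y i \<and> y i \<le> r" if "i < k" for i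
  proof -
    have "\<bar>y i\<bar> \<le> r" using h that by blast
    then show ?thesis by linarith
  qed
  then show "y \<in> cube k r" using h unfolding cube_def PiE_def extensional_def by auto
qed

lemma closed_cube: "closed (cube k r)"
proof -
  have "cube k r = (\<Inter>i\<in>{..<k}. {y. \<bar>y i\<bar> \<le> r}) \<inter> (\<Inter>i\<in>-{..<k}. {y. y i = undefined})"
    by (auto simp: cube_iff)
  moreover have "closed (\<Inter>i\<in>{..<k}. {y::nat\<Rightarrow>real. \<bar>y i\<bar> \<le> r})"
    by (intro closed_INT ballI closed_Collect_le cont_coord_abs continuous_on_const)
  moreover have "closed (\<Inter>i\<in>-{..<k}. {y::nat\<Rightarrow>real. y i = undefined})"
    by (intro closed_INT ballI closed_Collect_eq continuous_on_product_coordinates continuous_on_const)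
  ultimately show ?thesis by auto
qed

lemma annulus_cube: "annulus k j \<subseteq> cube k (2 ^ j)"
  unfolding annulus_def by auto

lemma closure_annulus_cube: "closure (annulus k j) \<subseteq> cube k (2 ^ j)"
  by (rule closure_minimal[OF annulus_cube closed_cube])

lemma open_U: "open {y::nat \<Rightarrow> real. \<forall>i<k. \<bar>y i\<bar> < R}"
proof -
  have "{y::nat \<Rightarrow> real. \<forall>i<k. \<bar>y i\<bar> < R} = (\<Inter>i\<in>{..<k}. {y. \<bar>y i\<bar> < R})" by auto
  moreover have "open (\<Inter>i\<in>{..<k}. {y::nat\<Rightarrow>real. \<bar>y i\<bar> < R})"
    by (intro open_INT ballI open_Collect_less cont_coord_abs continuous_on_const) auto
  ultimately show ?thesis by simp
qed

lemma U_closure_annulus: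
  assumes "j \<ge> 1"
  shows "{y::nat \<Rightarrow> real. \<forall>i<k. \<bar>y i\<bar> < 2 ^ (j - 1)} \<inter> closure (annulus k j) = {}"
proof -
  have "{y::nat \<Rightarrow> real. \<forall>i<k. \<bar>y i\<bar> < 2 ^ (j - 1)} \<inter> annulus k j = {}"
    using assms unfolding annulus_def cube_def by (auto simp: abs_less_iff)
  then show ?thesis by (subst open_Int_closure_eq_empty[OF open_U])
qed

lemma cell_in_cube:
  assumes s: "s > 0" and sub: "cbox_cell k s z \<subseteq> cube k r" and i: "i < k"
  shows "- r \<le> s * z i" "s * (z i + 1) \<le> r"
proof -
  let ?q = "restrict (\<lambda>i. s * real_of_int (z i)) {..<k}"
  let ?q' = "restrict (\<lambda>i. s * (real_of_int (z i) + 1)) {..<k}"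
  have "?q \<in> cbox_cell k s z" "?q' \<in> cbox_cell k s z"
    unfolding cbox_cell_def using s by auto
  then have "?q \<in> cube k r" "?q' \<in> cube k r" using sub by auto
  then show "- r \<le> s * z i" "s * (z i + 1) \<le> r" using i unfolding cube_def by auto
qed

lemma levels_disjoint:
  assumes s: "s > 0" "s' > 0" and jj: "j < j'"
    and c1: "cbox_cell k s z \<subseteq> closure (annulus k j)"
    and c2: "cbox_cell k s' z' \<subseteq> closure (annulus k j')"
    and p1: "p \<in> hbox k s z" and p2: "p \<in> hbox k s' z'"
  shows False
proof -
  define R :: real where "R = 2 ^ (j' - 1)"
  have jR: "(2::real) ^ j \<le> R" unfolding R_def using jj by (intro power_increasing) auto
  have c1': "cbox_cell k s z \<subseteq> cube k (2 ^ j)" using c1 closure_annulus_cube by blast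
  define y where "y = restrict (\<lambda>i. max (s' * z' i) (min (s' * (z' i + 1)) 0)) {..<k}"
  have "y \<in> cbox_cell k s' z'"
    unfolding cbox_cell_def y_def using s by auto
  moreover have "\<bar>y i\<bar> < R" if i: "i < k" for i
  proof -
    have "- (2 ^ j) \<le> s * z i" "s * (z i + 1) \<le> 2 ^ j"
      using cell_in_cube[OF s(1) c1' i] by auto
    moreover have "s * z i \<le> p i" "p i < s * (z i + 1)" using p1 i unfolding hbox_def by auto
    moreover have "s' * z' i \<le> p i" "p i < s' * (z' i + 1)" using p2 i unfolding hbox_def by auto
    ultimately show ?thesis using jR i unfolding y_def by (auto simp: max_def min_def)
  qed
  ultimately have "y \<in> {y::nat \<Rightarrow> real. \<forall>i<k. \<bar>y i\<bar> < 2 ^ (j' - 1)} \<inter> closure (annulus k j')"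
    using c2 unfolding R_def by auto
  with U_closure_annulus[of j' k] jj show False by auto
qed




lemma grid_pos:
  assumes "N \<ge> 1" shows "real (grid_m d T N) > 0"
proof -
  have "real N powr (- 1 / real (d * T)) > 0" using assms by simp
  then have "1 / (real N powr (- 1 / real (d * T))) > 0" by simp
  then have "\<lceil>1 / (real N powr (- 1 / real (d * T)))\<rceil> > 0" by simp
  then show ?thesis unfolding grid_m_def by simp
qed

lemma unif_props:
  assumes "N \<ge> 1"
  shows "countable (unif_part d T N t)" "\<And>G. G \<in> unif_part d T N t \<Longrightarrow> G \<in> sets (PiM {..<d*t} (\<lambda>_. borel))"
    "pdisj (unif_part d T N t)"
proof -
  have eq: "unif_part d T N t = range (hbox (d*t) (1 / real (grid_m d T N)))"
    unfolding unif_part_def by auto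
  show "countable (unif_part d T N t)" unfolding eq by (rule countable_hboxes)
  show "\<And>G. G \<in> unif_part d T N t \<Longrightarrow> G \<in> sets (PiM {..<d*t} (\<lambda>_. borel))"
    unfolding eq using hbox_sets by auto
  have s: "1 / real (grid_m d T N) > 0" using grid_pos[OF assms] by simp
  show "pdisj (unif_part d T N t)"
    unfolding eq pdisj_def using hbox_same[OF s] by blast
qed

lemma nonunif_props:
  assumes "N \<ge> 1"
  shows "countable (nonunif_part d T N t)" "\<And>G. G \<in> nonunif_part d T N t \<Longrightarrow> G \<in> sets (PiM {..<d*t} (\<lambda>_. borel))"
    "pdisj (nonunif_part d T N t)"
proof -
  define sj where "sj j = (2::real) powi (int j - 1) / real (grid_m d T N)" for j :: nat
  have sj: "sj j > 0" for j unfolding sj_def using grid_pos[OF assms] by simp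
  have eq: "nonunif_part d T N t = {hbox (d*t) (sj j) z | j z. cbox_cell (d*t) (sj j) z \<subseteq> closure (annulus (d*t) j)}"
    unfolding nonunif_part_def sj_def by simp
  have sub: "nonunif_part d T N t \<subseteq> (\<Union>j. range (hbox (d*t) (sj j)))"
    unfolding eq by auto
  show "countable (nonunif_part d T N t)"
    by (rule countable_subset[OF sub]) (intro countable_UN countable_hboxes, simp)
  show "\<And>G. G \<in> nonunif_part d T N t \<Longrightarrow> G \<in> sets (PiM {..<d*t} (\<lambda>_. borel))"
    using sub hbox_sets by blast
  show "pdisj (nonunif_part d T N t)"
    unfolding pdisj_def
  proof (intro ballI allI impI)
    fix G G' p assume G: "G \<in> nonunif_part d T N t" and G': "G' \<in> nonunif_part d T N t"
      and p: "p \<in> G" and p': "p \<in> G'"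
    from G obtain j z where Gd: "G = hbox (d*t) (sj j) z" and c: "cbox_cell (d*t) (sj j) z \<subseteq> closure (annulus (d*t) j)"
      unfolding eq by blast
    from G' obtain j' z' where Gd': "G' = hbox (d*t) (sj j') z'" and c': "cbox_cell (d*t) (sj j') z' \<subseteq> closure (annulus (d*t) j')"
      unfolding eq by blast
    have "j = j'"
    proof (rule ccontr)
      assume "j \<noteq> j'"
      then consider "j < j'" | "j' < j" by linarith
      then show False
      proof cases
        case 1 show False by (rule levels_disjoint[OF sj sj 1 c c']) (use p p' Gd Gd' in auto)
      next
        case 2 show False by (rule levels_disjoint[OF sj sj 2 c' c]) (use p p' Gd Gd' in auto)
      qed
    qed
    then show "G = G'" using hbox_same[OF sj] p p' Gd Gd' by blast
  qed
qed




lemma HH_restrict: "HH N e \<Phi> v = HH N e \<Phi> (restrict v {1..N})"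
proof -
  have "cnt N v G = cnt N (restrict v {1..N}) G" for G
    unfolding cnt_def by (rule arg_cong[where f=card]) auto
  then show ?thesis unfolding HH_def by simp
qed

lemma cellof_meas:
  assumes cnt: "countable \<Phi>" and sets: "\<And>G. G \<in> \<Phi> \<Longrightarrow> G \<in> sets S" and dj: "pdisj \<Phi>"
  shows "cellof \<Phi> \<in> measurable S (count_space (insert None (Some ` \<Phi>)))"
proof -
  have cD: "countable (insert None (Some ` \<Phi>))" using cnt by simp
  have U: "\<Union>\<Phi> \<in> sets S" using cnt sets by (intro sets.countable_Union) auto
  show ?thesis unfolding measurable_count_space_eq_countable[OF cD]
  proof (intro conjI ballI)
    show "cellof \<Phi> \<in> space S \<rightarrow> insert None (Some ` \<Phi>)"
    proof (rule Pi_I)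
      fix p show "cellof \<Phi> p \<in> insert None (Some ` \<Phi>)"
      proof (cases "cellof \<Phi> p")
        case None then show ?thesis by simp
      next
        case (Some G) then show ?thesis using cellof_Some_in(1)[OF Some] by auto
      qed
    qed
  next
    fix a assume a: "a \<in> insert None (Some ` \<Phi>)"
    show "cellof \<Phi> -` {a} \<inter> space S \<in> sets S"
    proof (cases a)
      case None
      then have "cellof \<Phi> -` {a} \<inter> space S = space S - \<Union>\<Phi>" by (auto simp: cellof_None_iff)
      then show ?thesis using U by auto
    next
      case (Some G)
      with a have G: "G \<in> \<Phi>" by auto
      then have "cellof \<Phi> -` {a} \<inter> space S = G" using Some cellof_Some_iff[OF dj G]
        sets.sets_into_space[OF sets[OF G]] by auto
      then show ?thesis using sets[OF G] by simp
    qed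
  qed
qed

lemma id_count_meas:
  assumes I: "finite I" and D: "countable D"
  shows "(\<lambda>w. w) \<in> measurable (PiM I (\<lambda>_. count_space D)) (count_space (PiE I (\<lambda>_. D)))"
proof -
  have cC: "countable (PiE I (\<lambda>_. D))" using I D by (intro countable_PiE) auto
  show ?thesis unfolding measurable_count_space_eq_countable[OF cC]
  proof (intro conjI ballI)
    show "(\<lambda>w. w) \<in> space (PiM I (\<lambda>_. count_space D)) \<rightarrow> PiE I (\<lambda>_. D)"
      by (simp add: space_PiM)
  next
    fix w assume w: "w \<in> PiE I (\<lambda>_. D)"
    then have "(\<lambda>w. w) -` {w} \<inter> space (PiM I (\<lambda>_. count_space D)) = PiE I (\<lambda>n. {w n})"
      using PiE_singleton[of w I] by (auto simp: space_PiM PiE_def)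
    also have "\<dots> \<in> sets (PiM I (\<lambda>_. count_space D))"
      using w I by (intro sets_PiM_I_finite) auto
    finally show "(\<lambda>w. w) -` {w} \<inter> space (PiM I (\<lambda>_. count_space D)) \<in> sets (PiM I (\<lambda>_. count_space D))" .
  qed
qed

lemma main_generic:
  fixes d T N t :: nat and x :: real
    and \<mu> :: "(nat \<Rightarrow> real) measure" and M :: "'a measure"
    and X :: "nat \<Rightarrow> 'a \<Rightarrow> (nat \<Rightarrow> real)"
    and \<Phi> :: "(nat \<Rightarrow> real) set set"
  assumes d: "d \<ge> 1" and tT: "t \<le> T"
    and Pmu: "prob_space \<mu>"
    and PM: "prob_space M"
    and ind: "prob_space.indep_vars M (\<lambda>_. PiM {..<d * T} (\<lambda>_. borel)) X UNIV"
    and dist: "\<forall>n. distr M (PiM {..<d * T} (\<lambda>_. borel)) (X n) = \<mu>"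
    and N: "N \<ge> 1"
    and x: "x > 0"
    and cntb: "countable \<Phi>" and setsb: "\<And>G. G \<in> \<Phi> \<Longrightarrow> G \<in> sets (PiM {..<d*t} (\<lambda>_. borel))"
    and dj: "pdisj \<Phi>"
  shows "measure M {\<omega> \<in> space M.
            \<bar>Ytil d t N \<Phi> X \<omega> - (\<integral>\<omega>'. Ytil d t N \<Phi> X \<omega>' \<partial>M)\<bar> \<ge> x}
         \<le> 2 * exp (- 2 * real N * x\<^sup>2)"
proof -
  interpret M: prob_space M by (rule PM)
  define Q where "Q = PiM {..<d * T} (\<lambda>_. borel :: real measure)"
  define I where "I = {1..N}"
  define e where "e = 1 - 1 / real d"
  define D where "D = insert None (Some ` \<Phi>)"
  define cf where "cf p = cellof \<Phi> (restrict p {..<d*t})" for p :: "nat \<Rightarrow> real"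
  define F where "F y = HH N e \<Phi> (\<lambda>n. cf (y n))" for y :: "nat \<Rightarrow> nat \<Rightarrow> real"
  define Tup where "Tup \<omega> = (\<lambda>n\<in>I. X n \<omega>)" for \<omega>
  have d1: "1 / real d \<le> 1" using d by simp
  have e: "0 \<le> e" "e \<le> 1" unfolding e_def using d1 by auto
  have I: "finite I" "I \<noteq> {}" "card I = N" using N unfolding I_def by auto
  have cD: "countable D" unfolding D_def using cntb by simp
  have Yrep: "Ytil d t N \<Phi> X \<omega> = F (Tup \<omega>)" for \<omega>
  proof -
    have "(real N * emp_meas d t N X \<omega> G) powr (1 - 1 / real d) = gp e (cnt N (\<lambda>n. cf (Tup \<omega> n)) G)"
      if G: "G \<in> \<Phi>" for G
    proof -
      have "{n \<in> {1..N}. restrict (X n \<omega>) {..<d * t} \<in> G} = {n \<in> {1..N}. cf (Tup \<omega> n) = Some G}"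
        unfolding cf_def Tup_def I_def using cellof_Some_iff[OF dj G] by auto
      then show ?thesis unfolding emp_meas_def gp_def e_def cnt_def using N by simp
    qed
    then show ?thesis unfolding Ytil_def F_def HH_def by (simp cong: infsum_cong)
  qed
  have cellm: "cellof \<Phi> \<in> measurable (PiM {..<d*t} (\<lambda>_. borel :: real measure)) (count_space D)"
    unfolding D_def by (rule cellof_meas[OF cntb setsb dj])
  have sub: "{..<d*t} \<subseteq> {..<d*T}" using tT by (auto intro: order_less_le_trans)
  have cfm: "cf \<in> measurable Q (count_space D)"
    unfolding cf_def Q_def by (rule measurable_comp[OF measurable_restrict_subset[OF sub] cellm, unfolded comp_def])
  have vvm: "(\<lambda>y. \<lambda>n\<in>I. cf (y n)) \<in> measurable (PiM I (\<lambda>_. Q)) (PiM I (\<lambda>_. count_space D))"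
  proof (rule measurable_restrict)
    fix i assume i: "i \<in> I"
    show "(\<lambda>y. cf (y i)) \<in> measurable (PiM I (\<lambda>_. Q)) (count_space D)"
      using measurable_comp[OF measurable_component_singleton[OF i, of "\<lambda>_. Q"] cfm] by (simp add: comp_def)
  qed
  have Feq: "F y = HH N e \<Phi> (\<lambda>n\<in>I. cf (y n))" for y
    unfolding F_def I_def by (subst HH_restrict) simp
  have Fm: "F \<in> borel_measurable (PiM I (\<lambda>_. Q))"
  proof -
    have "(\<lambda>y. HH N e \<Phi> (\<lambda>n\<in>I. cf (y n))) \<in> borel_measurable (PiM I (\<lambda>_. Q))"
      using measurable_comp[OF measurable_comp[OF vvm id_count_meas[OF I(1) cD]] borel_measurable_count_space]
      by (simp add: comp_def)
    moreover have "F = (\<lambda>y. HH N e \<Phi> (\<lambda>n\<in>I. cf (y n)))" by (rule ext) (rule Feq)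
    ultimately show ?thesis by simp
  qed
  have Fb: "\<bar>F y\<bar> \<le> real N" for y unfolding F_def by (rule HH_bound[OF e N])
  have Fd: "\<bar>F (y(i:=a)) - F (y(i:=b))\<bar> \<le> 1 / real N" if i: "i \<in> I" for y i a b
  proof -
    define v where "v = (\<lambda>n. cf (y n))"
    have va: "(\<lambda>n. cf ((y(i:=a)) n)) = v(i := cf a)" for a unfolding v_def by auto
    have vi: "G \<in> \<Phi>" if "(v(i := cf a)) i = Some G" for a G
      using that cellof_Some_in(1) unfolding cf_def by simp
    have iN: "i \<in> {1..N}" using i I_def by simp
    have h1: "0 \<le> HH N e \<Phi> (v(i := cf a)) - HH N e \<Phi> (v(i:=None))"
      "HH N e \<Phi> (v(i := cf a)) - HH N e \<Phi> (v(i:=None)) \<le> 1 / real N" for a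
      using HH_diff[OF e N iN, of "v(i := cf a)" \<Phi>] vi by auto
    show ?thesis unfolding F_def va using h1[of a] h1[of b] by linarith
  qed
  have setsmu: "sets \<mu> = sets Q" using dist[rule_format, of 0] unfolding Q_def by (metis sets_distr)
  have spmu: "space \<mu> = space Q" by (rule sets_eq_imp_space_eq[OF setsmu])
  define MI where "MI = PiM I (\<lambda>_. \<mu>)"
  have setsMI: "sets MI = sets (PiM I (\<lambda>_. Q))" unfolding MI_def by (rule sets_PiM_cong) (auto simp: setsmu)
  have spMI: "space MI = space (PiM I (\<lambda>_. Q))" by (rule sets_eq_imp_space_eq[OF setsMI])
  have FmI: "F \<in> borel_measurable MI" by (subst measurable_cong_sets[OF setsMI refl]) (rule Fm)
  have c2: "(1 / real N)\<^sup>2 * real (card I) > 0" using N unfolding I(3) by simp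
  have mcd: "measure MI {y \<in> space MI. \<bar>F y - (\<integral>y. F y \<partial>MI)\<bar> \<ge> x}
      \<le> 2 * exp (- 2 * x\<^sup>2 / ((1 / real N)\<^sup>2 * real (card I)))"
    unfolding MI_def
    by (rule mcd_abs[where B="real N"]) (use Pmu I FmI Fb Fd c2 x in \<open>auto simp: MI_def\<close>)
  have expeq: "- 2 * x\<^sup>2 / ((1 / real N)\<^sup>2 * real (card I)) = - 2 * real N * x\<^sup>2"
    using I N by (simp add: field_simps power2_eq_square)
  have rv: "X i \<in> measurable M Q" for i
    using ind unfolding M.indep_vars_def Q_def by auto
  have indI: "M.indep_vars (\<lambda>_. Q) X I" using M.indep_vars_subset[OF ind] unfolding Q_def by auto
  have Tupm: "Tup \<in> measurable M (PiM I (\<lambda>_. Q))" unfolding Tup_def by (rule measurable_restrict) (rule rv)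
  have distrT: "distr M (PiM I (\<lambda>_. Q)) Tup = MI"
  proof -
    have "distr M (PiM I (\<lambda>_. Q)) Tup = PiM I (\<lambda>i. distr M Q (X i))"
      using M.indep_vars_iff_distr_eq_PiM[where M'="\<lambda>_. Q", OF I(2) rv] indI unfolding Tup_def by simp
    also have "\<dots> = MI" unfolding MI_def using dist unfolding Q_def by simp
    finally show ?thesis .
  qed
  have intEq: "(\<integral>\<omega>. Ytil d t N \<Phi> X \<omega> \<partial>M) = (\<integral>y. F y \<partial>MI)"
    unfolding Yrep distrT[symmetric] by (rule integral_distr[OF Tupm Fm, symmetric])
  define S where "S = {y \<in> space (PiM I (\<lambda>_. Q)). \<bar>F y - (\<integral>y. F y \<partial>MI)\<bar> \<ge> x}"
  define C where "C = (\<integral>y. F y \<partial>MI)"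
  have gm: "(\<lambda>y. \<bar>F y - C\<bar>) \<in> borel_measurable (PiM I (\<lambda>_. Q))"
    by (intro borel_measurable_abs borel_measurable_diff Fm borel_measurable_const)
  have "S = (\<lambda>y. \<bar>F y - C\<bar>) -` {x..} \<inter> space (PiM I (\<lambda>_. Q))" unfolding S_def C_def by auto
  then have Ssets: "S \<in> sets (PiM I (\<lambda>_. Q))" using measurable_sets[OF gm, of "{x..}"] by simp
  have iC: "(\<integral>\<omega>'. Ytil d t N \<Phi> X \<omega>' \<partial>M) = C" unfolding C_def by (rule intEq)
  have SC: "S = {y \<in> space (PiM I (\<lambda>_. Q)). \<bar>F y - C\<bar> \<ge> x}" unfolding S_def C_def ..
  have seteq: "{\<omega> \<in> space M. \<bar>Ytil d t N \<Phi> X \<omega> - (\<integral>\<omega>'. Ytil d t N \<Phi> X \<omega>' \<partial>M)\<bar> \<ge> x} = Tup -` S \<inter> space M"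
  proof (rule set_eqI)
    fix \<omega>
    have sp: "\<omega> \<in> space M \<Longrightarrow> Tup \<omega> \<in> space (PiM I (\<lambda>_. Q))" by (rule measurable_space[OF Tupm])
    have yr: "Ytil d t N \<Phi> X \<omega> = F (Tup \<omega>)" by (rule Yrep)
    show "\<omega> \<in> {\<omega> \<in> space M. \<bar>Ytil d t N \<Phi> X \<omega> - (\<integral>\<omega>'. Ytil d t N \<Phi> X \<omega>' \<partial>M)\<bar> \<ge> x} \<longleftrightarrow> \<omega> \<in> Tup -` S \<inter> space M"
      unfolding iC SC using sp yr by auto
  qed
  have "measure M {\<omega> \<in> space M. \<bar>Ytil d t N \<Phi> X \<omega> - (\<integral>\<omega>'. Ytil d t N \<Phi> X \<omega>' \<partial>M)\<bar> \<ge> x}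
      = measure (distr M (PiM I (\<lambda>_. Q)) Tup) S"
    unfolding seteq by (rule measure_distr[OF Tupm Ssets, symmetric])
  note XX = this
  have YY: "measure (distr M (PiM I (\<lambda>_. Q)) Tup) S = measure MI {y \<in> space MI. \<bar>F y - (\<integral>y. F y \<partial>MI)\<bar> \<ge> x}"
    by (simp only: distrT S_def spMI)
  have ZZ: "measure MI {y \<in> space MI. \<bar>F y - (\<integral>y. F y \<partial>MI)\<bar> \<ge> x} \<le> 2 * exp (- 2 * real N * x\<^sup>2)"
    using mcd by (simp only: expeq)
  show ?thesis unfolding XX YY by (rule ZZ)
qed


theorem mainTheorem10:
  fixes d T N t :: nat and x :: real
    and \<mu> :: "(nat \<Rightarrow> real) measure" and M :: "'a measure"
    and X :: "nat \<Rightarrow> 'a \<Rightarrow> (nat \<Rightarrow> real)"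
    and \<Phi> :: "(nat \<Rightarrow> real) set set"
  assumes "d \<ge> 1" and "T \<ge> 2"
    and "prob_space \<mu>"
    and "prob_space M"
    and "prob_space.indep_vars M (\<lambda>_. PiM {..<d * T} (\<lambda>_. borel)) X UNIV"
    and "\<forall>n. distr M (PiM {..<d * T} (\<lambda>_. borel)) (X n) = \<mu>"
    and "1 \<le> t" and "t \<le> T - 1"
    and "N \<ge> 1"
    and "x > 0"
    and "\<Phi> = unif_part d T N t \<or> \<Phi> = nonunif_part d T N t"
  shows "measure M {\<omega> \<in> space M.
            \<bar>Ytil d t N \<Phi> X \<omega> - (\<integral>\<omega>'. Ytil d t N \<Phi> X \<omega>' \<partial>M)\<bar> \<ge> x}
         \<le> 2 * exp (- 2 * real N * x\<^sup>2)"
proof -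
  have tT: "t \<le> T" using assms(8) by simp
  from assms(11) show ?thesis
  proof
    assume \<Phi>: "\<Phi> = unif_part d T N t"
    show ?thesis unfolding \<Phi>
      by (rule main_generic[OF assms(1) tT assms(3,4,5,6,9,10) unif_props[OF assms(9)]])
  next
    assume \<Phi>: "\<Phi> = nonunif_part d T N t"
    show ?thesis unfolding \<Phi>
      by (rule main_generic[OF assms(1) tT assms(3,4,5,6,9,10) nonunif_props[OF assms(9)]])
  qed
qed

end
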